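(* Let $F$ be a continuous distribution function with a density that is symmetric about $\theta_0$ and unimodal (so $\theta_0 = F^{-1}(1/2)$). Fix $0 < \alpha < 1$ and $0 \le \varepsilon < 1/2$, let $k_n = \arg\min_k |\alpha^*(n,k,\varepsilon) - \alpha|$, and consider the tests $\varphi_{n,\theta_0}$ of $H_0:\theta = \theta_0$ versus $H_1: \theta \ne \theta_0$ defined by $$\varphi_{n,\theta_0}(X_n) = \begin{cases} 1, & \text{if } T_{n,\theta_0}(X_n) \le k_n \text{ or } T_{n,\theta_0}(X_n) \ge n - k_n,\\ 0, & \text{if } k_n < T_{n,\theta_0}(X_n) < n - k_n,\end{cases}$$ where $T_{n,\theta_0}(X_n) = \sum_{i=1}^n I(x_i - \theta_0 > 0)$. Then: 1. For $0 \le \delta < (1-\varepsilon)/2$, the $\delta$-consistency distance of $(\varphi_{n,\theta_0})$ at $F$ is $$K\{(\varphi_{n,\theta_0}),F,\delta\} = F^{-1}\Big\{\frac{1+\varepsilon}{2(1-\delta)}\Big\} - \theta_0$$ (equal to $F^{-1}\{(1+\varepsilon)/(2(1-\delta))\}$ when $\theta_0 = 0$). 2. The power breakdown point of $(\varphi_{n,\theta_0})$ at $F$ is $\delta^* = (1-\varepsilon)/2$. 3. The sequence $(\varphi_{n,\theta_0})$ has $\varepsilon$-robust power at $F$ if and only if $\varepsilon < 1/3$.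
   Context: For a distribution function $F$, $F^{-1}(p) = \inf\{x : F(x) \ge p\}$, and $F_\lambda(x) = F(x - \lambda)$. For $0 \le \delta < 1/2$, $\mathcal{F}_\delta(F) = \{G : G = (1-\delta)F + \delta H,\ H \text{ an arbitrary distribution on } \mathbb{R}\}$. For integers $n \ge 1$, $k \ge 0$, $\alpha^*(n,k,\varepsilon) = 1 - P(k < Z_n < n-k)$ with $Z_n \sim \mathrm{Binomial}(n,(1-\varepsilon)/2)$. Under $G$, $X_n = (x_1,\dots,x_n)$ is an i.i.d. sample of size $n$ from $G$. A sequence of nonrandomized tests $\varphi_{n,\theta_0}$, $n \ge n_0$, has $\delta$-robust power at $F$ if there exists $K$ such that $$\inf_{G \in \mathcal{F}_\delta(F_\lambda)} \lim_{n\to\infty} P_G\{\varphi_{n,\theta_0}(X_n) = 1\} = 1 \quad \text{for all } |\lambda| > K.$$ The $\delta$-consistency distance $K\{(\varphi_{n,\theta_0}),F,\delta\}$ is the infimum of the set of $K$ for which this holds. The power breakdown point $\delta^*$ of the sequence at $F$ is the supremum of the set of $\delta$ for which the sequence has $\delta$-robust power at $F$. *)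

theory Defs
  imports "HOL-Probability.Probability"
begin

definition is_distribution_function :: "(real \<Rightarrow> real) \<Rightarrow> bool" where
  "is_distribution_function F \<longleftrightarrow>
     mono F \<and> (\<forall>a. continuous (at_right a) F) \<and>
     (F \<longlongrightarrow> 0) at_bot \<and> (F \<longlongrightarrow> 1) at_top"

definition quantile :: "(real \<Rightarrow> real) \<Rightarrow> real \<Rightarrow> real" where
  "quantile F p = Inf {x. F x \<ge> p}"

definition shift_df :: "(real \<Rightarrow> real) \<Rightarrow> real \<Rightarrow> (real \<Rightarrow> real)" where
  "shift_df F l = (\<lambda>x. F (x - l))"

definition contam_nbhd :: "real \<Rightarrow> (real \<Rightarrow> real) \<Rightarrow> (real \<Rightarrow> real) set" where
  "contam_nbhd \<delta> F = {G. \<exists>H. is_distribution_function H \<and>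
                          G = (\<lambda>x. (1 - \<delta>) * F x + \<delta> * H x)}"

definition alpha_star :: "nat \<Rightarrow> nat \<Rightarrow> real \<Rightarrow> real" where
  "alpha_star n k \<epsilon> =
     1 - measure_pmf.prob (binomial_pmf n ((1 - \<epsilon>) / 2)) {z. k < z \<and> z < n - k}"

definition reject_prob ::
    "(nat \<Rightarrow> (nat \<Rightarrow> real) \<Rightarrow> bool) \<Rightarrow> (real \<Rightarrow> real) \<Rightarrow> nat \<Rightarrow> real" where
  "reject_prob \<phi> G n =
     measure (PiM {..<n} (\<lambda>_. interval_measure G))
             {x \<in> space (PiM {..<n} (\<lambda>_. interval_measure G)). \<phi> n x}"

definition robust_power_K ::
    "(nat \<Rightarrow> (nat \<Rightarrow> real) \<Rightarrow> bool) \<Rightarrow> (real \<Rightarrow> real) \<Rightarrow> real \<Rightarrow> real \<Rightarrow> bool" where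
  "robust_power_K \<phi> F \<delta> K \<longleftrightarrow>
     (\<forall>l. \<bar>l\<bar> > K \<longrightarrow>
        (\<forall>G \<in> contam_nbhd \<delta> (shift_df F l). (reject_prob \<phi> G \<longlonglongrightarrow> 1)))"

definition has_robust_power ::
    "(nat \<Rightarrow> (nat \<Rightarrow> real) \<Rightarrow> bool) \<Rightarrow> (real \<Rightarrow> real) \<Rightarrow> real \<Rightarrow> bool" where
  "has_robust_power \<phi> F \<delta> \<longleftrightarrow> (\<exists>K. robust_power_K \<phi> F \<delta> K)"

definition consistency_distance ::
    "(nat \<Rightarrow> (nat \<Rightarrow> real) \<Rightarrow> bool) \<Rightarrow> (real \<Rightarrow> real) \<Rightarrow> real \<Rightarrow> real" where
  "consistency_distance \<phi> F \<delta> = Inf {K. robust_power_K \<phi> F \<delta> K}"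

definition power_breakdown ::
    "(nat \<Rightarrow> (nat \<Rightarrow> real) \<Rightarrow> bool) \<Rightarrow> (real \<Rightarrow> real) \<Rightarrow> real" where
  "power_breakdown \<phi> F = Sup {\<delta>. 0 \<le> \<delta> \<and> \<delta> < 1/2 \<and> has_robust_power \<phi> F \<delta>}"

definition sign_stat :: "real \<Rightarrow> nat \<Rightarrow> (nat \<Rightarrow> real) \<Rightarrow> nat" where
  "sign_stat \<theta>0 n x = card {i \<in> {..<n}. x i - \<theta>0 > 0}"

definition sign_test :: "real \<Rightarrow> (nat \<Rightarrow> nat) \<Rightarrow> nat \<Rightarrow> (nat \<Rightarrow> real) \<Rightarrow> bool" where
  "sign_test \<theta>0 k n x \<longleftrightarrow>
     sign_stat \<theta>0 n x \<le> k n \<or> sign_stat \<theta>0 n x \<ge> n - k n"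

end

theory Submission
  imports Defs
begin

lemma choose_ratio:
  assumes "i < n"
  shows "real (n choose Suc i) * real (Suc i) = real (n choose i) * real (n - i)"
proof -
  have "Suc i * (n choose Suc i) = n * (n - 1 choose i)" by (rule binomial_absorption)
  moreover have "(n - i) * (n choose i) = n * (n - 1 choose i)" by (rule binomial_absorb_comp)
  ultimately have "(n choose Suc i) * Suc i = (n choose i) * (n - i)" by (simp add: mult.commute)
  then show ?thesis by (metis of_nat_mult)
qed

lemma pmf_ratio:
  assumes r: "0 \<le> r" "r \<le> 1" and i: "i < n"
  shows "pmf (binomial_pmf n r) (Suc i) * (real (Suc i) * (1 - r))
       = pmf (binomial_pmf n r) i * (real (n - i) * r)"
proof -
  have e: "n - i = Suc (n - Suc i)" using i by simp
  have "pmf (binomial_pmf n r) (Suc i) * (real (Suc i) * (1 - r))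
      = (real (n choose Suc i) * real (Suc i)) * r^Suc i * (1-r)^(Suc (n - Suc i))"
    using r by (simp add: pmf_binomial algebra_simps)
  also have "\<dots> = (real (n choose i) * real (n - i)) * r^Suc i * (1-r)^(n - i)"
    using choose_ratio[OF i] e by simp
  also have "\<dots> = pmf (binomial_pmf n r) i * (real (n - i) * r)"
    using r by (simp add: pmf_binomial algebra_simps)
  finally show ?thesis .
qed

lemma pmf_window:
  assumes r: "0 < r" "r < 1" and rho: "0 \<le> \<rho>"
    and H: "\<And>i. j \<le> i \<Longrightarrow> i < j + L \<Longrightarrow> i < n \<and> \<rho> * (real (Suc i) * (1 - r)) \<le> real (n - i) * r"
  shows "l \<le> L \<Longrightarrow> \<rho> ^ l * pmf (binomial_pmf n r) j \<le> pmf (binomial_pmf n r) (j + l)"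
proof (induction l)
  case 0
  then show ?case by simp
next
  case (Suc l)
  let ?p = "pmf (binomial_pmf n r)"
  have h: "j + l < n" "\<rho> * (real (Suc (j+l)) * (1 - r)) \<le> real (n - (j+l)) * r"
    using H[of "j+l"] Suc.prems by auto
  have ih: "\<rho> ^ l * ?p j \<le> ?p (j + l)" using Suc by simp
  have pos: "real (Suc (j+l)) * (1 - r) > 0" using r by simp
  have "?p (Suc (j+l)) * (real (Suc (j+l)) * (1 - r)) = ?p (j+l) * (real (n - (j+l)) * r)"
    using pmf_ratio[of r "j+l" n] r h by simp
  also have "\<dots> \<ge> ?p (j+l) * (\<rho> * (real (Suc (j+l)) * (1 - r)))"
    using h(2) by (intro mult_left_mono) auto
  finally have "(\<rho> * ?p (j+l)) * (real (Suc (j+l)) * (1 - r)) \<le> ?p (Suc (j+l)) * (real (Suc (j+l)) * (1 - r))"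
    by (simp add: mult.commute mult.left_commute)
  then have "\<rho> * ?p (j+l) \<le> ?p (Suc (j+l))" using pos by (rule mult_right_le_imp_le)
  moreover have "\<rho> * (\<rho> ^ l * ?p j) \<le> \<rho> * ?p (j+l)"
    using ih rho by (intro mult_left_mono) auto
  ultimately show ?case by simp
qed

lemma rho_t1: fixes r n L :: real assumes "n > 0" shows "n - ((n+1)*r + L) = n * ((1 - r) - (r + L) / n)"
  using assms by (simp add: field_simps)
lemma rho_t2: fixes r n L :: real assumes "n > 0" shows "((n+1)*r + L) + 1 = n * (r + (r + L + 1) / n)"
  using assms by (simp add: field_simps)
lemma rho_t3: fixes A B r n :: real assumes "n > 0" shows "(n * A) * r / ((n * B) * c) = A * r / (B * c)"
  using assms by (metis (no_types, lifting) mult.assoc mult_divide_mult_cancel_left_if less_irrefl)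

lemma rho_lim:
  fixes r L :: real
  assumes r: "0 < r" "r < 1"
  shows "(\<lambda>n. (real n - ((real n+1)*r + L))*r/((((real n+1)*r + L) + 1)*(1-r))) \<longlonglongrightarrow> 1"
proof -
  have a: "(\<lambda>n. ((1 - r) - (r + L) / real n) * r / ((r + (r + L + 1) / real n) * (1 - r)))
           \<longlonglongrightarrow> ((1 - r) - 0) * r / ((r + 0) * (1 - r))"
    using r by (intro tendsto_intros lim_const_over_n) auto
  have b: "((1 - r) - 0) * r / ((r + 0) * (1 - r)) = 1" using r by simp
  have ev: "\<forall>\<^sub>F n in sequentially.
     ((1 - r) - (r + L) / real n) * r / ((r + (r + L + 1) / real n) * (1 - r))
     = (real n - ((real n+1)*r + L))*r/((((real n+1)*r + L) + 1)*(1-r))"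
  proof (rule eventually_sequentiallyI[of 1])
    fix n :: nat assume "1 \<le> n"
    then have n: "real n > 0" by simp
    show "((1 - r) - (r + L) / real n) * r / ((r + (r + L + 1) / real n) * (1 - r))
     = (real n - ((real n+1)*r + L))*r/((((real n+1)*r + L) + 1)*(1-r))"
      unfolding rho_t1[OF n] rho_t2[OF n] rho_t3[OF n] ..
  qed
  show ?thesis by (rule Lim_transform_eventually[OF a[unfolded b] ev])
qed

lemma sum_pmf_le1: "finite A \<Longrightarrow> sum (pmf p) A \<le> 1"
  by (metis measure_measure_pmf_finite measure_pmf.subprob_measure_le_1)

lemma pmf_small_left:
  assumes r: "0 < r" "r < 1" and c: "c > 0"
  shows "\<forall>\<^sub>F n in sequentially. \<forall>j. real j \<le> (real n+1)*r \<longrightarrow> pmf (binomial_pmf n r) j \<le> c"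
proof -
  obtain L :: nat where L: "2 / c \<le> real L + 1"
    by (metis add.commute add_increasing2 real_arch_simple zero_le_one)
  define x where "x n = (real n+1)*r + real L" for n
  define \<rho> where "\<rho> n = (real n - x n)*r/((x n + 1)*(1-r))" for n
  have "\<rho> \<longlonglongrightarrow> 1" using rho_lim[OF r, of "real L"] by (simp add: \<rho>_def[abs_def] x_def[abs_def])
  then have "(\<lambda>n. \<rho> n ^ L) \<longlonglongrightarrow> 1" by (metis tendsto_power power_one)
  then have e1: "\<forall>\<^sub>F n in sequentially. \<rho> n ^ L > 1/2" by (rule order_tendstoD) simp
  obtain N :: nat where N: "(r + real L)/(1-r) \<le> real N" using real_arch_simple by blast
  have e2: "\<forall>\<^sub>F n in sequentially. x n \<le> real n"
  proof (rule eventually_sequentiallyI[of N])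
    fix n assume "N \<le> n"
    then have "(r + real L)/(1-r) \<le> real n" using N by linarith
    then have "r + real L \<le> real n * (1 - r)" using r by (simp add: divide_le_eq)
    then show "x n \<le> real n" by (simp add: x_def algebra_simps)
  qed
  show ?thesis
    using e1 e2
  proof eventually_elim
    case (elim n)
    let ?p = "pmf (binomial_pmf n r)"
    have "(real n + 1) * r \<ge> 0" using r by simp
    then have xpos: "x n + 1 > 0" by (simp add: x_def)
    have rho0: "\<rho> n \<ge> 0" unfolding \<rho>_def using elim(2) r xpos by (intro divide_nonneg_pos) auto
    have "(real n - x n)*r \<le> (x n + 1)*(1-r)"
      using r by (simp add: x_def algebra_simps)
    then have rho1: "\<rho> n \<le> 1" unfolding \<rho>_def using xpos r by (simp add: divide_le_eq)
    have rhoeq: "\<rho> n * ((x n + 1)*(1-r)) = (real n - x n)*r" unfolding \<rho>_def using xpos r by simp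
    show ?case
    proof (intro allI impI)
      fix j assume j: "real j \<le> (real n+1)*r"
      have H: "i < n \<and> \<rho> n * (real (Suc i) * (1 - r)) \<le> real (n - i) * r"
        if i: "j \<le> i" "i < j + L" for i
      proof -
        have ix: "real i \<le> x n" using i j by (simp add: x_def)
        have "real i < real n"
          using i j elim(2) unfolding x_def by linarith
        then have "i < n" by simp
        moreover have "\<rho> n * (real (Suc i) * (1 - r)) \<le> \<rho> n * ((x n + 1)*(1-r))"
          using rho0 ix r by (intro mult_left_mono mult_right_mono) auto
        moreover have "(real n - x n)*r \<le> real (n - i) * r"
          using ix r \<open>i < n\<close> by (intro mult_right_mono) (auto simp: of_nat_diff)
        ultimately show ?thesis using rhoeq by linarith
      qed
      have w: "\<rho> n ^ L * ?p j \<le> ?p (j + l)" if "l \<le> L" for l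
      proof -
        have "\<rho> n ^ L * ?p j \<le> \<rho> n ^ l * ?p j"
          using power_decreasing[OF that rho0 rho1] by (intro mult_right_mono) auto
        also have "\<dots> \<le> ?p (j + l)" by (rule pmf_window[OF r rho0 H that]) auto
        finally show ?thesis .
      qed
      have "(\<Sum>l\<le>L. \<rho> n ^ L * ?p j) \<le> (\<Sum>l\<le>L. ?p (j + l))"
        using w by (intro sum_mono) auto
      also have "(\<Sum>l\<le>L. ?p (j + l)) = sum ?p ((+) j ` {..L})"
        by (subst sum.reindex) (auto simp: inj_on_def)
      also have "\<dots> \<le> 1" by (rule sum_pmf_le1) auto
      finally have s: "(real L + 1) * (\<rho> n ^ L * ?p j) \<le> 1" by (simp add: add.commute)
      have "(real L + 1) * (1/2 * ?p j) \<le> (real L + 1) * (\<rho> n ^ L * ?p j)"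
        using elim(1) by (intro mult_left_mono mult_right_mono) auto
      with s have "?p j \<le> 2 / (real L + 1)" by (simp add: field_simps)
      also have "\<dots> \<le> c" using L c by (simp add: field_simps)
      finally show "?p j \<le> c" .
    qed
  qed
qed

lemma set_pmf_binomial_sub: "0 \<le> p \<Longrightarrow> p \<le> 1 \<Longrightarrow> set_pmf (binomial_pmf n p) \<subseteq> {..n}"
  by (auto simp: set_pmf_binomial_eq split: if_splits)

lemma prob_binomial_sum:
  assumes "0 \<le> p" "p \<le> 1"
  shows "measure_pmf.prob (binomial_pmf n p) A = (\<Sum>j\<in>A \<inter> {..n}. pmf (binomial_pmf n p) j)"
proof -
  have e: "(A \<inter> {..n}) \<inter> set_pmf (binomial_pmf n p) = A \<inter> set_pmf (binomial_pmf n p)"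
    using set_pmf_binomial_sub[OF assms, of n] by blast
  have "measure_pmf.prob (binomial_pmf n p) A = measure_pmf.prob (binomial_pmf n p) (A \<inter> set_pmf (binomial_pmf n p))"
    by (rule measure_Int_set_pmf[symmetric])
  also have "\<dots> = measure_pmf.prob (binomial_pmf n p) ((A \<inter> {..n}) \<inter> set_pmf (binomial_pmf n p))"
    by (simp only: e)
  also have "\<dots> = measure_pmf.prob (binomial_pmf n p) (A \<inter> {..n})" by (rule measure_Int_set_pmf)
  also have "\<dots> = (\<Sum>j\<in>A \<inter> {..n}. pmf (binomial_pmf n p) j)" by (rule measure_measure_pmf_finite) auto
  finally show ?thesis .
qed

lemma pmf_binomial_sym:
  assumes "0 \<le> r" "r \<le> 1" "j \<le> n"
  shows "pmf (binomial_pmf n r) j = pmf (binomial_pmf n (1 - r)) (n - j)"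
proof -
  have c: "n choose j = n choose (n - j)" by (rule binomial_symmetric[OF assms(3)])
  have d: "n - (n - j) = j" using assms(3) by simp
  show ?thesis using assms by (simp only: pmf_binomial c d) (simp add: mult_ac)
qed

lemma pmf_small:
  assumes r: "0 < r" "r < 1" and c: "c > 0"
  shows "\<forall>\<^sub>F n in sequentially. \<forall>j. pmf (binomial_pmf n r) j \<le> c"
proof -
  have a: "\<forall>\<^sub>F n in sequentially. \<forall>j. real j \<le> (real n+1)*r \<longrightarrow> pmf (binomial_pmf n r) j \<le> c"
    by (rule pmf_small_left[OF r c])
  have b: "\<forall>\<^sub>F n in sequentially. \<forall>j. real j \<le> (real n+1)*(1-r) \<longrightarrow> pmf (binomial_pmf n (1-r)) j \<le> c"
    by (rule pmf_small_left) (use r c in auto)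
  show ?thesis using a b
proof eventually_elim
  case (elim n)
  show ?case
  proof
    fix j
    show "pmf (binomial_pmf n r) j \<le> c"
    proof (cases "j \<le> n")
      case False
      then show ?thesis using r c by (simp add: pmf_binomial binomial_eq_0)
    next
      case True
      show ?thesis
      proof (cases "real j \<le> (real n + 1) * r")
        case True
        then show ?thesis using elim by blast
      next
        case False
        have "real (n - j) \<le> (real n + 1) * (1 - r)"
          using False \<open>j \<le> n\<close> r by (simp add: of_nat_diff algebra_simps)
        then have "pmf (binomial_pmf n (1 - r)) (n - j) \<le> c" using elim(2) r c by auto
        moreover have "pmf (binomial_pmf n r) j = pmf (binomial_pmf n (1 - r)) (n - j)"
          by (rule pmf_binomial_sym) (use r \<open>j \<le> n\<close> in auto)
        ultimately show ?thesis by simp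
      qed
    qed
  qed
qed
qed

definition RS :: "nat \<Rightarrow> nat \<Rightarrow> nat set" where
  "RS n k = {z. z \<le> k \<or> n - k \<le> z}"

lemma alpha_star_RS: "alpha_star n j \<epsilon> = measure_pmf.prob (binomial_pmf n ((1 - \<epsilon>) / 2)) (RS n j)"
proof -
  have "RS n j = UNIV - {z. j < z \<and> z < n - j}" by (auto simp: RS_def)
  then show ?thesis unfolding alpha_star_def
    using measure_pmf.prob_compl[of "{z. j < z \<and> z < n - j}" "binomial_pmf n ((1 - \<epsilon>) / 2)"] by simp
qed

lemma RS_step: "RS n (Suc j) \<subseteq> RS n j \<union> {Suc j, n - Suc j}"
  by (auto simp: RS_def)

lemma prob_RS_step:
  "measure_pmf.prob M (RS n (Suc j)) \<le> measure_pmf.prob M (RS n j) + pmf M (Suc j) + pmf M (n - Suc j)"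
proof -
  have "measure_pmf.prob M (RS n (Suc j)) \<le> measure_pmf.prob M (RS n j \<union> {Suc j, n - Suc j})"
    by (rule measure_pmf.finite_measure_mono[OF RS_step]) auto
  also have "\<dots> \<le> measure_pmf.prob M (RS n j) + measure_pmf.prob M {Suc j, n - Suc j}"
    by (rule measure_Un_le) auto
  also have "measure_pmf.prob M {Suc j, n - Suc j} = sum (pmf M) {Suc j, n - Suc j}"
    by (rule measure_measure_pmf_finite) auto
  also have "\<dots> \<le> pmf M (Suc j) + pmf M (n - Suc j)"
    by (cases "Suc j = n - Suc j") (auto simp: pmf_nonneg)
  finally show ?thesis by simp
qed

lemma RS_n: "RS n n = UNIV" by (auto simp: RS_def)

lemma prob_RS_0:
  assumes "0 \<le> p" "p \<le> 1"
  shows "measure_pmf.prob (binomial_pmf n p) (RS n 0) \<le> pmf (binomial_pmf n p) 0 + pmf (binomial_pmf n p) n"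
proof -
  have "measure_pmf.prob (binomial_pmf n p) (RS n 0) = (\<Sum>j\<in>RS n 0 \<inter> {..n}. pmf (binomial_pmf n p) j)"
    by (rule prob_binomial_sum[OF assms])
  also have "RS n 0 \<inter> {..n} \<subseteq> {0, n}" by (auto simp: RS_def)
  then have "(\<Sum>j\<in>RS n 0 \<inter> {..n}. pmf (binomial_pmf n p) j) \<le> sum (pmf (binomial_pmf n p)) {0, n}"
    by (intro sum_mono2) (auto simp: pmf_nonneg)
  also have "\<dots> \<le> pmf (binomial_pmf n p) 0 + pmf (binomial_pmf n p) n"
    by (cases "n = 0") (auto simp: pmf_nonneg)
  finally show ?thesis .
qed

lemma hoeff_le:
  assumes "0 \<le> p" "p \<le> 1" "n > 0" "\<eta> \<ge> 0"
  shows "measure_pmf.prob (binomial_pmf n p) {x. real x / real n \<le> p - \<eta>} \<le> exp (- 2 * real n * \<eta>\<^sup>2)"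
  using binomial_distribution.prob_le'[of p n \<eta>] assms by (simp add: binomial_distribution_def)

lemma hoeff_ge:
  assumes "0 \<le> p" "p \<le> 1" "n > 0" "\<eta> \<ge> 0"
  shows "measure_pmf.prob (binomial_pmf n p) {x. p + \<eta> \<le> real x / real n} \<le> exp (- 2 * real n * \<eta>\<^sup>2)"
  using binomial_distribution.prob_ge'[of p n \<eta>] assms by (simp add: binomial_distribution_def)

lemma exp_lim:
  assumes "\<eta> > 0"
  shows "(\<lambda>n. exp (- 2 * real n * \<eta>\<^sup>2)) \<longlonglongrightarrow> 0"
proof -
  have e: "exp (- 2 * real n * \<eta>\<^sup>2) = exp (- 2 * \<eta>\<^sup>2) ^ n" for n
    by (metis exp_of_nat_mult mult.assoc mult.commute)
  have "norm (exp (- 2 * \<eta>\<^sup>2)) < 1" using assms by simp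
  then have "(\<lambda>n. exp (- 2 * \<eta>\<^sup>2) ^ n) \<longlonglongrightarrow> 0" by (intro LIMSEQ_power_zero)
  then show ?thesis by (simp only: e)
qed

lemma granular:
  assumes \<alpha>: "0 < \<alpha>" "\<alpha> < 1" and \<epsilon>: "0 \<le> \<epsilon>" "\<epsilon> < 1/2" and d: "d > 0"
  shows "\<forall>\<^sub>F n in sequentially. \<exists>j. \<bar>alpha_star n j \<epsilon> - \<alpha>\<bar> \<le> d"
proof -
  define r where "r = (1 - \<epsilon>) / 2"
  have r: "0 < r" "r < 1" using \<epsilon> by (auto simp: r_def)
  define c where "c = min d \<alpha> / 3"
  have c: "c > 0" "2 * c \<le> d" "2 * c < \<alpha>" using d \<alpha> by (auto simp: c_def)
  show ?thesis using pmf_small[OF r c(1)]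
  proof eventually_elim
    case (elim n)
    define a where "a j = measure_pmf.prob (binomial_pmf n r) (RS n j)" for j
    have aeq: "alpha_star n j \<epsilon> = a j" for j by (simp add: alpha_star_RS a_def r_def)
    have a0: "a 0 < \<alpha>"
    proof -
      have "a 0 \<le> pmf (binomial_pmf n r) 0 + pmf (binomial_pmf n r) n"
        unfolding a_def by (rule prob_RS_0) (use r in auto)
      also have "\<dots> \<le> 2 * c" using elim[rule_format, of 0] elim[rule_format, of n] by simp
      finally show ?thesis using c by simp
    qed
    have an: "a n = 1" by (simp add: a_def RS_n)
    define S where "S = {j. j \<le> n \<and> a j \<le> \<alpha>}"
    have fS: "finite S" and S0: "0 \<in> S" using a0 by (auto simp: S_def)
    define j0 where "j0 = Max S"
    have j0S: "j0 \<in> S" unfolding j0_def using fS S0 by (intro Max_in) auto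
    have j0n: "j0 < n" using j0S an \<alpha> by (auto simp: S_def le_less)
    have "Suc j0 \<notin> S" using Max_ge[OF fS, of "Suc j0"] unfolding j0_def[symmetric] by auto
    then have aS: "a (Suc j0) > \<alpha>" using j0n by (auto simp: S_def)
    have "a (Suc j0) \<le> a j0 + pmf (binomial_pmf n r) (Suc j0) + pmf (binomial_pmf n r) (n - Suc j0)"
      unfolding a_def by (rule prob_RS_step)
    also have "\<dots> \<le> a j0 + 2 * c" using elim[rule_format, of "Suc j0"] elim[rule_format, of "n - Suc j0"] by simp
    finally have "a j0 \<ge> \<alpha> - d" using aS c by simp
    moreover have "a j0 \<le> \<alpha>" using j0S by (simp add: S_def)
    ultimately show ?case by (intro exI[of _ j0]) (simp add: aeq abs_le_iff)
  qed
qed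

lemma astar_conv:
  assumes \<alpha>: "0 < \<alpha>" "\<alpha> < 1" and \<epsilon>: "0 \<le> \<epsilon>" "\<epsilon> < 1/2"
    and kn: "\<And>n j. \<bar>alpha_star n (k n) \<epsilon> - \<alpha>\<bar> \<le> \<bar>alpha_star n j \<epsilon> - \<alpha>\<bar>"
  shows "(\<lambda>n. alpha_star n (k n) \<epsilon>) \<longlonglongrightarrow> \<alpha>"
proof (rule tendstoI)
  fix e :: real assume e: "e > 0"
  show "\<forall>\<^sub>F n in sequentially. dist (alpha_star n (k n) \<epsilon>) \<alpha> < e"
    using granular[OF \<alpha> \<epsilon> half_gt_zero[OF e]]
  proof eventually_elim
    case (elim n)
    then obtain j where "\<bar>alpha_star n j \<epsilon> - \<alpha>\<bar> \<le> e/2" by blast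
    then have "\<bar>alpha_star n (k n) \<epsilon> - \<alpha>\<bar> \<le> e/2" using kn[of n j] by linarith
    then show ?case using e by (simp add: dist_real_def)
  qed
qed

lemma real_diff_le: "real n - real m \<le> real (n - m)"
  by (cases "m \<le> n") (auto simp: of_nat_diff)

definition Rej :: "(nat \<Rightarrow> nat) \<Rightarrow> nat \<Rightarrow> real \<Rightarrow> real" where
  "Rej k n p = measure_pmf.prob (binomial_pmf n p) (RS n (k n))"

lemma Rej_le1: "Rej k n p \<le> 1" by (simp add: Rej_def)
lemma Rej_ge0: "Rej k n p \<ge> 0" by (simp add: Rej_def)

lemma eventually_2exp:
  assumes "\<eta> > 0" "c > 0"
  shows "\<forall>\<^sub>F n in sequentially. 2 * exp (- 2 * real n * \<eta>\<^sup>2) < c"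
proof -
  have "(\<lambda>n. 2 * exp (- 2 * real n * \<eta>\<^sup>2)) \<longlonglongrightarrow> 2 * 0"
    by (intro tendsto_mult tendsto_const exp_lim assms)
  then show ?thesis using assms(2) by (intro order_tendstoD) auto
qed

context
  fixes \<alpha> \<epsilon> :: real and k :: "nat \<Rightarrow> nat"
  assumes \<alpha>: "0 < \<alpha>" "\<alpha> < 1" and \<epsilon>: "0 \<le> \<epsilon>" "\<epsilon> < 1/2"
    and kn: "\<And>n j. \<bar>alpha_star n (k n) \<epsilon> - \<alpha>\<bar> \<le> \<bar>alpha_star n j \<epsilon> - \<alpha>\<bar>"
begin

lemma k_lower:
  assumes \<eta>: "\<eta> > 0"
  shows "\<forall>\<^sub>F n in sequentially. real n * ((1 - \<epsilon>)/2 - \<eta>) \<le> real (k n)"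
proof -
  define r where "r = (1 - \<epsilon>)/2"
  have r: "0 < r" "r \<le> 1/2" using \<epsilon> by (auto simp: r_def)
  have A: "\<forall>\<^sub>F n in sequentially. alpha_star n (k n) \<epsilon> > \<alpha>/2"
    using astar_conv[OF \<alpha> \<epsilon> kn] \<alpha> by (intro order_tendstoD) auto
  have B: "\<forall>\<^sub>F n in sequentially. 2 * exp (- 2 * real n * \<eta>\<^sup>2) < \<alpha>/2"
    using \<eta> \<alpha> by (intro eventually_2exp) auto
  have C: "\<forall>\<^sub>F n in sequentially. n > 0" by (rule eventually_gt_at_top)
  show ?thesis using A B C
  proof eventually_elim
    case (elim n)
    show ?case unfolding r_def[symmetric]
    proof (rule ccontr)
      assume "\<not> real n * (r - \<eta>) \<le> real (k n)"
      then have kl: "real (k n) < real n * (r - \<eta>)" by simp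
      have nr: "real n * (r - \<eta>) \<le> real n" using r \<eta> by (simp add: mult_left_le)
      have npos: "real n > 0" using elim by simp
      have sub: "RS n (k n) \<subseteq> {x. real x / real n \<le> r - \<eta>} \<union> {x. r + \<eta> \<le> real x / real n}"
      proof
        fix z assume "z \<in> RS n (k n)"
        then consider "z \<le> k n" | "n - k n \<le> z" by (auto simp: RS_def)
        then show "z \<in> {x. real x / real n \<le> r - \<eta>} \<union> {x. r + \<eta> \<le> real x / real n}"
        proof cases
          case 1
          then have "real z < real n * (r - \<eta>)" using kl by linarith
          then have "real z / real n \<le> r - \<eta>" using npos by (simp add: divide_le_eq mult.commute)
          then show ?thesis by simp
        next
          case 2
          then have "real n - real (k n) \<le> real z" using real_diff_le[of n "k n"] by linarith
          moreover have "real n - real n * (r - \<eta>) = real n * (1 - r + \<eta>)" by (simp add: algebra_simps)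
          moreover have "real n * (r + \<eta>) \<le> real n * (1 - r + \<eta>)" by (intro mult_left_mono) (use r in auto)
          ultimately have "real n * (r + \<eta>) \<le> real z" using kl by linarith
          then have "r + \<eta> \<le> real z / real n" using npos by (simp add: le_divide_eq mult.commute)
          then show ?thesis by simp
        qed
      qed
      let ?M = "binomial_pmf n r"
      have "alpha_star n (k n) \<epsilon> = measure_pmf.prob ?M (RS n (k n))" by (simp add: alpha_star_RS r_def)
      also have "\<dots> \<le> measure_pmf.prob ?M ({x. real x / real n \<le> r - \<eta>} \<union> {x. r + \<eta> \<le> real x / real n})"
        by (rule measure_pmf.finite_measure_mono[OF sub]) auto
      also have "\<dots> \<le> measure_pmf.prob ?M {x. real x / real n \<le> r - \<eta>} + measure_pmf.prob ?M {x. r + \<eta> \<le> real x / real n}"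
        by (rule measure_Un_le) auto
      also have "\<dots> \<le> exp (- 2 * real n * \<eta>\<^sup>2) + exp (- 2 * real n * \<eta>\<^sup>2)"
        using r \<eta> elim(3) by (intro add_mono hoeff_le hoeff_ge) auto
      finally show False using elim(1,2) by simp
    qed
  qed
qed

lemma k_upper:
  assumes \<eta>: "\<eta> > 0"
  shows "\<forall>\<^sub>F n in sequentially. real (k n) \<le> real n * ((1 - \<epsilon>)/2 + \<eta>)"
proof -
  define r where "r = (1 - \<epsilon>)/2"
  have r: "0 < r" "r \<le> 1/2" using \<epsilon> by (auto simp: r_def)
  have A: "\<forall>\<^sub>F n in sequentially. alpha_star n (k n) \<epsilon> < (1 + \<alpha>)/2"
    using astar_conv[OF \<alpha> \<epsilon> kn] \<alpha> by (intro order_tendstoD) auto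
  have B: "\<forall>\<^sub>F n in sequentially. 2 * exp (- 2 * real n * \<eta>\<^sup>2) < 1 - \<alpha>"
    using \<eta> \<alpha> by (intro eventually_2exp) auto
  have C: "\<forall>\<^sub>F n in sequentially. n > 0" by (rule eventually_gt_at_top)
  show ?thesis using A B C
  proof eventually_elim
    case (elim n)
    show ?case unfolding r_def[symmetric]
    proof (rule ccontr)
      assume "\<not> real (k n) \<le> real n * (r + \<eta>)"
      then have kl: "real n * (r + \<eta>) < real (k n)" by simp
      have npos: "real n > 0" using elim by simp
      have sub: "- RS n (k n) \<subseteq> {x. r + \<eta> \<le> real x / real n}"
      proof
        fix z assume "z \<in> - RS n (k n)"
        then have "k n < z" by (auto simp: RS_def)
        then have "real n * (r + \<eta>) \<le> real z" using kl by linarith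
        then have "r + \<eta> \<le> real z / real n" using npos by (simp add: le_divide_eq mult.commute)
        then show "z \<in> {x. r + \<eta> \<le> real x / real n}" by simp
      qed
      let ?M = "binomial_pmf n r"
      have "measure_pmf.prob ?M (- RS n (k n)) \<le> measure_pmf.prob ?M {x. r + \<eta> \<le> real x / real n}"
        by (rule measure_pmf.finite_measure_mono[OF sub]) auto
      also have "\<dots> \<le> exp (- 2 * real n * \<eta>\<^sup>2)"
        using r \<eta> elim(3) by (intro hoeff_ge) auto
      finally have h: "measure_pmf.prob ?M (- RS n (k n)) \<le> exp (- 2 * real n * \<eta>\<^sup>2)" .
      have "measure_pmf.prob ?M (- RS n (k n)) = 1 - measure_pmf.prob ?M (RS n (k n))"
        using measure_pmf.prob_compl[of "RS n (k n)" ?M] by (simp add: Compl_eq_Diff_UNIV)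
      moreover have "alpha_star n (k n) \<epsilon> = measure_pmf.prob ?M (RS n (k n))" by (simp add: alpha_star_RS r_def)
      moreover have "exp (- 2 * real n * \<eta>\<^sup>2) > 0" by simp
      ultimately have "alpha_star n (k n) \<epsilon> \<ge> 1 - exp (- 2 * real n * \<eta>\<^sup>2)" using h by linarith
      moreover have "1 - exp (- 2 * real n * \<eta>\<^sup>2) > (1 + \<alpha>)/2" using elim(2) by (simp add: field_simps)
      ultimately show False using elim(1) by linarith
    qed
  qed
qed

end

context
  fixes \<alpha> \<epsilon> :: real and k :: "nat \<Rightarrow> nat"
  assumes \<alpha>: "0 < \<alpha>" "\<alpha> < 1" and \<epsilon>: "0 \<le> \<epsilon>" "\<epsilon> < 1/2"
    and kn: "\<And>n j. \<bar>alpha_star n (k n) \<epsilon> - \<alpha>\<bar> \<le> \<bar>alpha_star n j \<epsilon> - \<alpha>\<bar>"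
begin

lemma rej_hi:
  assumes p: "1 - (1 - \<epsilon>)/2 < p" "p \<le> 1"
  shows "(\<lambda>n. Rej k n p) \<longlonglongrightarrow> 1"
proof -
  define r where "r = (1 - \<epsilon>)/2"
  define \<eta> where "\<eta> = (p - (1 - r))/2"
  have \<eta>: "\<eta> > 0" using p by (simp add: \<eta>_def r_def)
  have p0: "0 \<le> p" using p \<epsilon> by (simp add: field_simps)
  have ev: "\<forall>\<^sub>F n in sequentially. 1 - exp (- 2 * real n * \<eta>\<^sup>2) \<le> Rej k n p"
    using k_lower[OF \<alpha> \<epsilon> kn \<eta>] eventually_gt_at_top[of 0]
  proof eventually_elim
    case (elim n)
    have npos: "real n > 0" using elim by simp
    have sub: "- RS n (k n) \<subseteq> {x. real x / real n \<le> p - \<eta>}"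
    proof
      fix z assume "z \<in> - RS n (k n)"
      then have z: "z < n - k n" by (auto simp: RS_def)
      then have "k n \<le> n" by simp
      then have "real z < real n - real (k n)" using z by (simp add: of_nat_diff)
      also have "\<dots> \<le> real n - real n * (r - \<eta>)" using elim(1) by (simp add: r_def)
      also have "\<dots> = real n * (p - \<eta>)" by (simp add: \<eta>_def algebra_simps)
      finally have "real z / real n \<le> p - \<eta>" using npos by (simp add: divide_le_eq mult.commute)
      then show "z \<in> {x. real x / real n \<le> p - \<eta>}" by simp
    qed
    let ?M = "binomial_pmf n p"
    have "measure_pmf.prob ?M (- RS n (k n)) \<le> measure_pmf.prob ?M {x. real x / real n \<le> p - \<eta>}"
      by (rule measure_pmf.finite_measure_mono[OF sub]) auto
    also have "\<dots> \<le> exp (- 2 * real n * \<eta>\<^sup>2)" using p p0 \<eta> elim(2) by (intro hoeff_le) auto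
    finally have h: "measure_pmf.prob ?M (- RS n (k n)) \<le> exp (- 2 * real n * \<eta>\<^sup>2)" .
    have "measure_pmf.prob ?M (- RS n (k n)) = 1 - measure_pmf.prob ?M (RS n (k n))"
      using measure_pmf.prob_compl[of "RS n (k n)" ?M] by (simp add: Compl_eq_Diff_UNIV)
    then show ?case using h by (simp add: Rej_def)
  qed
  have l: "(\<lambda>n. 1 - exp (- 2 * real n * \<eta>\<^sup>2)) \<longlonglongrightarrow> 1"
    using tendsto_diff[OF tendsto_const exp_lim[OF \<eta>], of 1] by simp
  show ?thesis
    by (rule tendsto_sandwich[OF ev _ l tendsto_const]) (simp add: Rej_le1)
qed

lemma rej_lo:
  assumes p: "0 \<le> p" "p < (1 - \<epsilon>)/2"
  shows "(\<lambda>n. Rej k n p) \<longlonglongrightarrow> 1"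
proof -
  define r where "r = (1 - \<epsilon>)/2"
  define \<eta> where "\<eta> = (r - p)/2"
  have \<eta>: "\<eta> > 0" using p by (simp add: \<eta>_def r_def)
  have p1: "p \<le> 1" using p \<epsilon> by (simp add: field_simps)
  have ev: "\<forall>\<^sub>F n in sequentially. 1 - exp (- 2 * real n * \<eta>\<^sup>2) \<le> Rej k n p"
    using k_lower[OF \<alpha> \<epsilon> kn \<eta>] eventually_gt_at_top[of 0]
  proof eventually_elim
    case (elim n)
    have npos: "real n > 0" using elim by simp
    have sub: "- RS n (k n) \<subseteq> {x. p + \<eta> \<le> real x / real n}"
    proof
      fix z assume "z \<in> - RS n (k n)"
      then have z: "k n < z" by (auto simp: RS_def)
      have "real n * (p + \<eta>) = real n * (r - \<eta>)" by (simp add: \<eta>_def algebra_simps)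
      also have "\<dots> \<le> real z" using elim(1) z by (simp add: r_def)
      finally have "p + \<eta> \<le> real z / real n" using npos by (simp add: le_divide_eq mult.commute)
      then show "z \<in> {x. p + \<eta> \<le> real x / real n}" by simp
    qed
    let ?M = "binomial_pmf n p"
    have "measure_pmf.prob ?M (- RS n (k n)) \<le> measure_pmf.prob ?M {x. p + \<eta> \<le> real x / real n}"
      by (rule measure_pmf.finite_measure_mono[OF sub]) auto
    also have "\<dots> \<le> exp (- 2 * real n * \<eta>\<^sup>2)" using p p1 \<eta> elim(2) by (intro hoeff_ge) auto
    finally have h: "measure_pmf.prob ?M (- RS n (k n)) \<le> exp (- 2 * real n * \<eta>\<^sup>2)" .
    have "measure_pmf.prob ?M (- RS n (k n)) = 1 - measure_pmf.prob ?M (RS n (k n))"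
      using measure_pmf.prob_compl[of "RS n (k n)" ?M] by (simp add: Compl_eq_Diff_UNIV)
    then show ?case using h by (simp add: Rej_def)
  qed
  have l: "(\<lambda>n. 1 - exp (- 2 * real n * \<eta>\<^sup>2)) \<longlonglongrightarrow> 1"
    using tendsto_diff[OF tendsto_const exp_lim[OF \<eta>], of 1] by simp
  show ?thesis
    by (rule tendsto_sandwich[OF ev _ l tendsto_const]) (simp add: Rej_le1)
qed

lemma rej_mid:
  assumes p: "(1 - \<epsilon>)/2 < p" "p < 1 - (1 - \<epsilon>)/2"
  shows "(\<lambda>n. Rej k n p) \<longlonglongrightarrow> 0"
proof -
  define r where "r = (1 - \<epsilon>)/2"
  define \<eta> where "\<eta> = min (p - r) (1 - r - p) / 2"
  have \<eta>: "\<eta> > 0" using p by (simp add: \<eta>_def r_def)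
  have \<eta>1: "r + \<eta> \<le> p - \<eta>" "p + \<eta> \<le> 1 - r - \<eta>" by (auto simp: \<eta>_def)
  have p01: "0 \<le> p" "p \<le> 1" using p \<epsilon> by (simp_all add: field_simps)
  have ev: "\<forall>\<^sub>F n in sequentially. Rej k n p \<le> 2 * exp (- 2 * real n * \<eta>\<^sup>2)"
    using k_upper[OF \<alpha> \<epsilon> kn \<eta>] eventually_gt_at_top[of 0]
  proof eventually_elim
    case (elim n)
    have npos: "real n > 0" using elim by simp
    have sub: "RS n (k n) \<subseteq> {x. real x / real n \<le> p - \<eta>} \<union> {x. p + \<eta> \<le> real x / real n}"
    proof
      fix z assume "z \<in> RS n (k n)"
      then consider "z \<le> k n" | "n - k n \<le> z" by (auto simp: RS_def)
      then show "z \<in> {x. real x / real n \<le> p - \<eta>} \<union> {x. p + \<eta> \<le> real x / real n}"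
      proof cases
        case 1
        then have "real z \<le> real n * (r + \<eta>)" using elim(1) unfolding r_def by linarith
        also have "\<dots> \<le> real n * (p - \<eta>)" using \<eta>1 by (intro mult_left_mono) auto
        finally have "real z / real n \<le> p - \<eta>" using npos by (simp add: divide_le_eq mult.commute)
        then show ?thesis by simp
      next
        case 2
        then have "real n - real (k n) \<le> real z" using real_diff_le[of n "k n"] by linarith
        moreover have "real n - real n * (r + \<eta>) = real n * (1 - r - \<eta>)" by (simp add: algebra_simps)
        moreover have "real n * (p + \<eta>) \<le> real n * (1 - r - \<eta>)" using \<eta>1 by (intro mult_left_mono) auto
        ultimately have "real n * (p + \<eta>) \<le> real z" using elim(1) unfolding r_def by linarith
        then have "p + \<eta> \<le> real z / real n" using npos by (simp add: le_divide_eq mult.commute)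
        then show ?thesis by simp
      qed
    qed
    let ?M = "binomial_pmf n p"
    have "Rej k n p \<le> measure_pmf.prob ?M ({x. real x / real n \<le> p - \<eta>} \<union> {x. p + \<eta> \<le> real x / real n})"
      unfolding Rej_def by (rule measure_pmf.finite_measure_mono[OF sub]) auto
    also have "\<dots> \<le> measure_pmf.prob ?M {x. real x / real n \<le> p - \<eta>} + measure_pmf.prob ?M {x. p + \<eta> \<le> real x / real n}"
      by (rule measure_Un_le) auto
    also have "\<dots> \<le> exp (- 2 * real n * \<eta>\<^sup>2) + exp (- 2 * real n * \<eta>\<^sup>2)"
      using p01 \<eta> elim(2) by (intro add_mono hoeff_le hoeff_ge) auto
    finally show ?case by simp
  qed
  have l: "(\<lambda>n. 2 * exp (- 2 * real n * \<eta>\<^sup>2)) \<longlonglongrightarrow> 0"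
    using tendsto_mult[OF tendsto_const exp_lim[OF \<eta>], of 2] by simp
  show ?thesis
    by (rule tendsto_sandwich[OF _ ev tendsto_const l]) (simp add: Rej_ge0)
qed

lemma rej_r: "(\<lambda>n. Rej k n ((1 - \<epsilon>)/2)) \<longlonglongrightarrow> \<alpha>"
  using astar_conv[OF \<alpha> \<epsilon> kn] by (simp add: Rej_def alpha_star_RS)

lemma rej_not1:
  assumes p: "(1 - \<epsilon>)/2 \<le> p" "p < 1 - (1 - \<epsilon>)/2"
  shows "\<not> (\<lambda>n. Rej k n p) \<longlonglongrightarrow> 1"
proof
  assume h: "(\<lambda>n. Rej k n p) \<longlonglongrightarrow> 1"
  show False
  proof (cases "p = (1 - \<epsilon>)/2")
    case True
    then show False using LIMSEQ_unique[OF h[unfolded True] rej_r] \<alpha> by simp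
  next
    case False
    then show False using LIMSEQ_unique[OF h rej_mid] p by simp
  qed
qed

end

lemma reject_prob_eq:
  assumes G: "is_distribution_function G"
  shows "reject_prob (sign_test \<theta>0 k) G n = Rej k n (1 - G \<theta>0)"
proof -
  have monoG: "\<And>x y. x \<le> y \<Longrightarrow> G x \<le> G y" and rc: "\<And>a. continuous (at_right a) G"
    and lb: "(G \<longlongrightarrow> 0) at_bot" and lt: "(G \<longlongrightarrow> 1) at_top"
    using G by (auto simp: is_distribution_function_def mono_def)
  define M where "M = interval_measure G"
  have rd: "real_distribution M" unfolding M_def by (rule real_distribution_interval_measure[OF monoG rc lb lt])
  then have pM: "prob_space M" by (simp add: real_distribution_def)
  have sM: "sets M = sets borel" "space M = UNIV" by (simp_all add: M_def)
  have mle: "measure M {..\<theta>0} = G \<theta>0" unfolding M_def by (rule measure_interval_measure_Iic[OF monoG rc lb])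
  have mgt: "measure M {\<theta>0<..} = 1 - G \<theta>0"
  proof -
    have e: "{\<theta>0<..} = space M - {..\<theta>0}" using sM by auto
    show ?thesis unfolding e using prob_space.prob_compl[OF pM, of "{..\<theta>0}"] mle sM by simp
  qed
  define g where "g = G \<theta>0"
  have g01: "0 \<le> g" "g \<le> 1" unfolding g_def mle[symmetric]
    using prob_space.prob_le_1[OF pM] by (auto simp: measure_nonneg)
  interpret P: finite_product_prob_space "\<lambda>_. M" "{..<n}"
    unfolding finite_product_prob_space_def finite_product_sigma_finite_def finite_product_sigma_finite_axioms_def
    using product_prob_spaceI[of "\<lambda>_. M"] pM by (auto simp: product_prob_space_def)
  define B where "B S = PiE {..<n} (\<lambda>i. if i \<in> S then {\<theta>0<..} else {..\<theta>0::real})" for S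
  define SS where "SS = {S. S \<subseteq> {..<n} \<and> card S \<in> RS n (k n)}"
  have spP: "space (PiM {..<n} (\<lambda>_. M)) = PiE {..<n} (\<lambda>_. UNIV)" by (simp add: space_PiM sM)
  have E: "{x \<in> space (PiM {..<n} (\<lambda>_. M)). sign_test \<theta>0 k n x} = (\<Union>S\<in>SS. B S)"
  proof (intro equalityI subsetI)
    fix x assume x: "x \<in> {x \<in> space (PiM {..<n} (\<lambda>_. M)). sign_test \<theta>0 k n x}"
    define S where "S = {i \<in> {..<n}. x i - \<theta>0 > 0}"
    have "S \<in> SS" using x by (auto simp: SS_def S_def sign_test_def sign_stat_def RS_def)
    moreover have "x \<in> B S" using x by (auto simp: B_def S_def spP PiE_def Pi_def)
    ultimately show "x \<in> (\<Union>S\<in>SS. B S)" by blast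
  next
    fix x assume "x \<in> (\<Union>S\<in>SS. B S)"
    then obtain S where S: "S \<in> SS" "x \<in> B S" by blast
    have xi: "x i \<in> (if i \<in> S then {\<theta>0<..} else {..\<theta>0})" if "i < n" for i
      using S(2) that by (auto simp: B_def PiE_def Pi_def)
    have "{i \<in> {..<n}. x i - \<theta>0 > 0} = S"
    proof (intro equalityI subsetI)
      fix i assume "i \<in> {i \<in> {..<n}. x i - \<theta>0 > 0}"
      then show "i \<in> S" using xi[of i] by (auto split: if_splits)
    next
      fix i assume i: "i \<in> S"
      then have "i < n" using S(1) by (auto simp: SS_def)
      then show "i \<in> {i \<in> {..<n}. x i - \<theta>0 > 0}" using xi[of i] i by auto
    qed
    moreover have "x \<in> space (PiM {..<n} (\<lambda>_. M))" using S(2) by (auto simp: spP B_def PiE_def Pi_def)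
    ultimately show "x \<in> {x \<in> space (PiM {..<n} (\<lambda>_. M)). sign_test \<theta>0 k n x}"
      using S(1) by (auto simp: sign_test_def sign_stat_def SS_def RS_def)
  qed
  have fSS: "finite SS" unfolding SS_def by (rule finite_subset[of _ "Pow {..<n}"]) auto
  have Bsets: "B S \<in> sets (PiM {..<n} (\<lambda>_. M))" for S
    unfolding B_def by (rule sets_PiM_I_finite) (auto simp: sM)
  have disj: "disjoint_family_on B SS"
    unfolding disjoint_family_on_def
  proof (intro ballI impI)
    fix S T assume ST: "S \<in> SS" "T \<in> SS" "S \<noteq> T"
    then obtain i where i: "i < n" "(i \<in> S \<and> i \<notin> T) \<or> (i \<in> T \<and> i \<notin> S)"
      by (auto simp: SS_def)
    show "B S \<inter> B T = {}"
    proof (rule ccontr)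
      assume "B S \<inter> B T \<noteq> {}"
      then obtain x where "x \<in> B S" "x \<in> B T" by blast
      then have "x i \<in> (if i \<in> S then {\<theta>0<..} else {..\<theta>0})" "x i \<in> (if i \<in> T then {\<theta>0<..} else {..\<theta>0})"
        using i(1) by (auto simp: B_def PiE_def Pi_def)
      then show False using i(2) by (auto split: if_splits)
    qed
  qed
  have meas: "measure (PiM {..<n} (\<lambda>_. M)) (B S) = (1 - g) ^ card S * g ^ (n - card S)" if S: "S \<in> SS" for S
  proof -
    have Ssub: "S \<subseteq> {..<n}" using S by (simp add: SS_def)
    have "measure (PiM {..<n} (\<lambda>_. M)) (B S) = (\<Prod>i\<in>{..<n}. measure M (if i \<in> S then {\<theta>0<..} else {..\<theta>0}))"
      unfolding B_def by (rule P.prob_times) (auto simp: sM)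
    also have "\<dots> = (\<Prod>i\<in>{..<n}. if i \<in> S then 1 - g else g)"
      by (rule prod.cong) (auto simp: mle mgt g_def)
    also have "\<dots> = (\<Prod>i\<in>{..<n} \<inter> {x. x \<in> S}. 1 - g) * (\<Prod>i\<in>{..<n} \<inter> - {x. x \<in> S}. g)"
      by (rule prod.If_cases) simp
    also have "{..<n} \<inter> {x. x \<in> S} = S" using Ssub by auto
    also have "{..<n} \<inter> - {x. x \<in> S} = {..<n} - S" by auto
    also have "(\<Prod>i\<in>S. 1 - g) * (\<Prod>i\<in>{..<n} - S. g) = (1 - g) ^ card S * g ^ card ({..<n} - S)" by simp
    also have "card ({..<n} - S) = n - card S" using Ssub by (simp add: card_Diff_subset finite_subset)
    finally show ?thesis .
  qed
  have "reject_prob (sign_test \<theta>0 k) G n = measure (PiM {..<n} (\<lambda>_. M)) (\<Union>S\<in>SS. B S)"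
    unfolding reject_prob_def E[symmetric] M_def ..
  also have "\<dots> = (\<Sum>S\<in>SS. measure (PiM {..<n} (\<lambda>_. M)) (B S))"
    by (rule P.finite_measure_finite_Union[OF fSS _ disj]) (auto simp: Bsets)
  also have "\<dots> = (\<Sum>S\<in>SS. (1 - g) ^ card S * g ^ (n - card S))"
    by (rule sum.cong) (auto simp: meas)
  also have "\<dots> = (\<Sum>j\<in>RS n (k n) \<inter> {..n}. \<Sum>S\<in>{S \<in> SS. card S = j}. (1 - g) ^ card S * g ^ (n - card S))"
  proof (rule sum.group[symmetric, OF fSS])
    show "finite (RS n (k n) \<inter> {..n})" by simp
    show "card ` SS \<subseteq> RS n (k n) \<inter> {..n}"
    proof
      fix j assume "j \<in> card ` SS"
      then obtain S where "S \<in> SS" "j = card S" by blast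
      then show "j \<in> RS n (k n) \<inter> {..n}"
        using card_mono[of "{..<n}" S] by (auto simp: SS_def)
    qed
  qed
  also have "\<dots> = (\<Sum>j\<in>RS n (k n) \<inter> {..n}. real (n choose j) * ((1 - g) ^ j * g ^ (n - j)))"
  proof (rule sum.cong[OF refl])
    fix j assume j: "j \<in> RS n (k n) \<inter> {..n}"
    have e: "{S \<in> SS. card S = j} = {S. S \<subseteq> {..<n} \<and> card S = j}" using j by (auto simp: SS_def)
    have "(\<Sum>S\<in>{S \<in> SS. card S = j}. (1 - g) ^ card S * g ^ (n - card S))
        = (\<Sum>S\<in>{S. S \<subseteq> {..<n} \<and> card S = j}. (1 - g) ^ j * g ^ (n - j))"
      unfolding e by (rule sum.cong) auto
    also have "\<dots> = real (n choose j) * ((1 - g) ^ j * g ^ (n - j))"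
      by (simp add: n_subsets)
    finally show "(\<Sum>S\<in>{S \<in> SS. card S = j}. (1 - g) ^ card S * g ^ (n - card S))
        = real (n choose j) * ((1 - g) ^ j * g ^ (n - j))" .
  qed
  also have "\<dots> = Rej k n (1 - g)"
    unfolding Rej_def using g01 by (subst prob_binomial_sum) (auto simp: pmf_binomial mult.assoc)
  finally show ?thesis by (simp add: g_def)
qed

lemma df_props:
  assumes "is_distribution_function G"
  shows "\<And>x y. x \<le> y \<Longrightarrow> G x \<le> G y" "\<And>a. continuous (at_right a) G"
    "(G \<longlongrightarrow> 0) at_bot" "(G \<longlongrightarrow> 1) at_top"
  using assms by (auto simp: is_distribution_function_def mono_def)

lemma df_bounds:
  assumes "is_distribution_function G"
  shows "0 \<le> G x" "G x \<le> 1"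
proof -
  note d = df_props[OF assms]
  show "0 \<le> G x"
    by (rule tendsto_upperbound[OF d(3)]) (auto simp: eventually_at_bot_linorder intro!: exI[of _ x] d(1))
  show "G x \<le> 1"
    by (rule tendsto_lowerbound[OF d(4)]) (auto simp: eventually_at_top_linorder intro!: exI[of _ x] d(1))
qed

lemma filterlim_shift_bot: "filterlim (\<lambda>x::real. x - l) at_bot at_bot"
  unfolding filterlim_at_bot
proof
  fix Z :: real
  show "\<forall>\<^sub>F x in at_bot. x - l \<le> Z"
    using eventually_le_at_bot[of "Z + l"] by eventually_elim simp
qed

lemma filterlim_shift_top: "filterlim (\<lambda>x::real. x - l) at_top at_top"
  unfolding filterlim_at_top
proof
  fix Z :: real
  show "\<forall>\<^sub>F x in at_top. Z \<le> x - l"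
    using eventually_ge_at_top[of "Z + l"] by eventually_elim simp
qed

lemma df_mix:
  assumes F: "is_distribution_function F" and cF: "continuous_on UNIV F"
    and H: "is_distribution_function H" and \<delta>: "0 \<le> \<delta>" "\<delta> \<le> 1"
  shows "is_distribution_function (\<lambda>x. (1 - \<delta>) * shift_df F l x + \<delta> * H x)"
proof -
  note dF = df_props[OF F] and dH = df_props[OF H]
  have m: "mono (\<lambda>x. (1 - \<delta>) * shift_df F l x + \<delta> * H x)"
    unfolding mono_def shift_df_def
  proof (intro allI impI)
    fix x y :: real assume xy: "x \<le> y"
    have "F (x - l) \<le> F (y - l)" using xy by (intro dF(1)) simp
    moreover have "H x \<le> H y" using xy by (rule dH(1))
    ultimately show "(1 - \<delta>) * F (x - l) + \<delta> * H x \<le> (1 - \<delta>) * F (y - l) + \<delta> * H y"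
      using \<delta> by (intro add_mono mult_left_mono) auto
  qed
  have ic: "isCont (\<lambda>x. F (x - l)) a" for a
  proof -
    have "continuous_on UNIV (\<lambda>x. F (x - l))"
      by (rule continuous_on_compose2[OF cF]) (auto intro!: continuous_intros)
    then show ?thesis by (simp add: continuous_on_eq_continuous_at)
  qed
  have rc: "continuous (at_right a) (\<lambda>x. (1 - \<delta>) * shift_df F l x + \<delta> * H x)" for a
    unfolding shift_df_def
    by (intro continuous_add continuous_mult continuous_const dH(2) continuous_at_imp_continuous_at_within[OF ic])
  have lb: "((\<lambda>x. (1 - \<delta>) * shift_df F l x + \<delta> * H x) \<longlongrightarrow> (1 - \<delta>) * 0 + \<delta> * 0) at_bot"
    unfolding shift_df_def
    by (intro tendsto_intros filterlim_compose[OF dF(3) filterlim_shift_bot] dH(3))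
  have lt: "((\<lambda>x. (1 - \<delta>) * shift_df F l x + \<delta> * H x) \<longlongrightarrow> (1 - \<delta>) * 1 + \<delta> * 1) at_top"
    unfolding shift_df_def
    by (intro tendsto_intros filterlim_compose[OF dF(4) filterlim_shift_top] dH(4))
  show ?thesis unfolding is_distribution_function_def using m rc lb lt by simp
qed

definition hstep :: "real \<Rightarrow> real \<Rightarrow> real \<Rightarrow> real" where
  "hstep c h x = (if x < c then 0 else if x < c + 1 then h else 1)"

lemma hstep_at: "hstep c h c = h" by (simp add: hstep_def)

lemma hstep_df:
  assumes h: "0 \<le> h" "h \<le> 1"
  shows "is_distribution_function (hstep c h)"
proof -
  have m: "mono (hstep c h)" unfolding mono_def hstep_def using h by auto
  have rc: "continuous (at_right a) (hstep c h)" for a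
  proof -
    define b where "b = (if a < c then c else if a < c + 1 then c + 1 else a + 1)"
    have ab: "a < b" by (auto simp: b_def)
    have "\<forall>\<^sub>F x in at_right a. hstep c h x = hstep c h a"
    proof (rule eventually_at_rightI[OF _ ab])
      fix x assume "x \<in> {a<..<b}"
      then show "hstep c h x = hstep c h a" by (auto simp: hstep_def b_def split: if_splits)
    qed
    then have "(hstep c h \<longlongrightarrow> hstep c h a) (at_right a)" by (rule tendsto_eventually)
    then show ?thesis by (simp add: continuous_within)
  qed
  have lb: "(hstep c h \<longlongrightarrow> 0) at_bot"
  proof (rule tendsto_eventually)
    show "\<forall>\<^sub>F x in at_bot. hstep c h x = 0"
      using eventually_le_at_bot[of "c - 1"] by eventually_elim (simp add: hstep_def)
  qed
  have lt: "(hstep c h \<longlongrightarrow> 1) at_top"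
  proof (rule tendsto_eventually)
    show "\<forall>\<^sub>F x in at_top. hstep c h x = 1"
      using eventually_ge_at_top[of "c + 1"] by eventually_elim (simp add: hstep_def)
  qed
  show ?thesis unfolding is_distribution_function_def using m rc lb lt by simp
qed

lemma contam_member:
  assumes "G \<in> contam_nbhd \<delta> (shift_df F l)"
  obtains H where "is_distribution_function H" "G = (\<lambda>x. (1 - \<delta>) * shift_df F l x + \<delta> * H x)"
  using assms by (auto simp: contam_nbhd_def)

context
  fixes F f :: "real \<Rightarrow> real" and \<theta>0 :: real
  assumes dfF: "is_distribution_function F"
    and contF: "continuous_on UNIV F"
    and dens_nonneg: "\<And>x. f x \<ge> 0"
    and dens_int: "integrable lborel f"
    and dens: "\<And>x. F x = (\<integral>t. indicator {..x} t * f t \<partial>lborel)"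
begin

lemma intI: "A \<in> sets borel \<Longrightarrow> integrable lborel (\<lambda>t. indicator A t * f t)"
  using integrable_mult_indicator[of A lborel f] dens_int by simp

lemma Fdiff:
  assumes "a \<le> b"
  shows "F b - F a = (\<integral>t. indicator {a<..b} t * f t \<partial>lborel)"
proof -
  have "F b - F a = (\<integral>t. indicator {..b} t * f t - indicator {..a} t * f t \<partial>lborel)"
    unfolding dens by (rule Bochner_Integration.integral_diff[symmetric]) (auto intro: intI)
  also have "\<dots> = (\<integral>t. indicator {a<..b} t * f t \<partial>lborel)"
    by (rule Bochner_Integration.integral_cong) (use assms in \<open>auto simp: indicator_def\<close>)
  finally show ?thesis .
qed

lemma zero_point:
  assumes ab: "a < b" and z: "(\<integral>t. indicator {a<..b} t * f t \<partial>lborel) = 0"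
  shows "\<exists>z. a < z \<and> z < b \<and> f z = 0"
proof (rule ccontr)
  assume nz: "\<not> (\<exists>z. a < z \<and> z < b \<and> f z = 0)"
  have "AE t in lborel. indicator {a<..b} t * f t = 0"
    using z intI[of "{a<..b}"] dens_nonneg
    by (subst integral_nonneg_eq_0_iff_AE[symmetric]) auto
  then have "AE t in lborel. t \<notin> {a<..<b}"
    by eventually_elim (use nz in \<open>auto simp: indicator_def split: if_splits\<close>)
  then have "emeasure lborel {a<..<b} = 0"
    by (subst (asm) AE_iff_measurable[of "{a<..<b}"]) auto
  moreover have "emeasure lborel {a<..<b} = ennreal (b - a)" using ab by simp
  ultimately show False using ab by simp
qed

lemma F_mono: "x \<le> y \<Longrightarrow> F x \<le> F y" using df_props(1)[OF dfF] .

lemma quantile_props: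
  assumes q: "0 < q" "q < 1"
  shows "F (quantile F q) = q" "\<And>x. x < quantile F q \<Longrightarrow> F x < q"
proof -
  define S where "S = {x. q \<le> F x}"
  note d = df_props[OF dfF]
  have "\<forall>\<^sub>F x in at_top. F x > q" using d(4) q by (intro order_tendstoD) auto
  then obtain x0 where "F x0 > q" by (auto simp: eventually_at_top_linorder)
  then have "x0 \<in> S" by (simp add: S_def)
  then have ne: "S \<noteq> {}" by blast
  have "\<forall>\<^sub>F x in at_bot. F x < q" using d(3) q by (intro order_tendstoD) auto
  then obtain b where b: "\<And>x. x \<le> b \<Longrightarrow> F x < q" by (auto simp: eventually_at_bot_linorder)
  have bdd: "bdd_below S"
  proof (rule bdd_belowI)
    fix x assume "x \<in> S"
    then show "b \<le> x" using b[of x] by (cases "x \<le> b") (auto simp: S_def)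
  qed
  have cl: "closed S" unfolding S_def by (rule closed_Collect_le[OF continuous_on_const contF])
  have QS: "quantile F q \<in> S" unfolding quantile_def S_def[symmetric] by (rule closed_contains_Inf[OF ne bdd cl])
  show lt: "\<And>x. x < quantile F q \<Longrightarrow> F x < q"
  proof -
    fix x assume x: "x < quantile F q"
    show "F x < q"
    proof (rule ccontr)
      assume "\<not> F x < q"
      then have "x \<in> S" by (auto simp: S_def)
      then have "quantile F q \<le> x" unfolding quantile_def S_def[symmetric] by (rule cInf_lower[OF _ bdd])
      then show False using x by simp
    qed
  qed
  have "F (quantile F q) \<le> q"
  proof (rule tendsto_upperbound)
    have "isCont F (quantile F q)" using contF by (simp add: continuous_on_eq_continuous_at)
    then show "(F \<longlongrightarrow> F (quantile F q)) (at_left (quantile F q))"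
      by (simp add: isCont_def filterlim_at_split)
    show "\<forall>\<^sub>F x in at_left (quantile F q). F x \<le> q"
    proof -
      have "quantile F q - 1 < quantile F q" by simp
      from eventually_at_left_real[OF this]
      show ?thesis by eventually_elim (auto intro: less_imp_le lt)
    qed
  qed (simp add: trivial_limit_at_left_real)
  then show "F (quantile F q) = q" using QS by (simp add: S_def)
qed

lemma quantile_gt:
  assumes q: "0 < q" "q < 1" and unimodal: "\<exists>m. mono_on {..m} f \<and> antimono_on {m..} f"
    and x: "quantile F q < x"
  shows "q < F x"
proof (rule ccontr)
  assume "\<not> q < F x"
  then have Fx: "F x \<le> q" by simp
  define Q where "Q = quantile F q"
  have FQ: "F Q = q" using quantile_props[OF q] by (simp add: Q_def)
  have "F Q \<le> F x" using x by (intro F_mono) (simp add: Q_def)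
  then have "F x = F Q" using Fx FQ by simp
  then have "(\<integral>t. indicator {Q<..x} t * f t \<partial>lborel) = 0" using Fdiff[of Q x] x by (simp add: Q_def)
  then obtain z where z: "Q < z" "z < x" "f z = 0" using zero_point[of Q x] x by (auto simp: Q_def)
  obtain m where mo: "mono_on {..m} f" and am: "antimono_on {m..} f" using unimodal by blast
  show False
  proof (cases "m \<le> z")
    case True
    have f0: "f u = 0" if "z \<le> u" for u
    proof -
      have "f u \<le> f z" using monotone_onD[OF am, of z u] True that by auto
      then show ?thesis using z(3) dens_nonneg[of u] by simp
    qed
    have const: "F y = F z" if "z \<le> y" for y
    proof -
      have "F y - F z = (\<integral>t. indicator {z<..y} t * f t \<partial>lborel)" by (rule Fdiff[OF that])
      also have "(\<lambda>t. indicator {z<..y} t * f t) = (\<lambda>t. 0::real)"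
        by (auto simp: fun_eq_iff indicator_def f0)
      finally show ?thesis by simp
    qed
    have "F z \<le> F x" using z by (intro F_mono) simp
    then have Fzq: "F z \<le> q" using Fx by simp
    have "\<forall>\<^sub>F y in at_top. F y > q" using df_props(4)[OF dfF] q by (intro order_tendstoD) auto
    then obtain N where N: "\<And>y. N \<le> y \<Longrightarrow> F y > q" by (auto simp: eventually_at_top_linorder)
    have "F (max N z) > q" by (rule N) simp
    moreover have "F (max N z) = F z" by (rule const) simp
    ultimately show False using Fzq by simp
  next
    case False
    have f0: "f u = 0" if "u \<le> z" for u
    proof -
      have "f u \<le> f z" using monotone_onD[OF mo, of u z] False that by auto
      then show ?thesis using z(3) dens_nonneg[of u] by simp
    qed
    have "(\<lambda>t. indicator {..z} t * f t) = (\<lambda>t. 0::real)"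
      by (auto simp: fun_eq_iff indicator_def f0)
    then have "F z = (\<integral>t. 0 \<partial>lborel)" unfolding dens by simp
    then have "F z = 0" by simp
    moreover have "F Q \<le> F z" using z by (intro F_mono) simp
    ultimately show False using FQ q by simp
  qed
qed

lemma F_sym:
  assumes symm: "\<And>t. f (\<theta>0 + t) = f (\<theta>0 - t)"
  shows "F (\<theta>0 + t) + F (\<theta>0 - t) = 1"
proof -
  define c where "c = (\<integral>t. f t \<partial>lborel)"
  have refl: "F (\<theta>0 - s) = (\<integral>u. indicator {\<theta>0 + s<..} u * f u \<partial>lborel)" for s
  proof -
    have "F (\<theta>0 - s) = (\<integral>u. indicator {..\<theta>0 - s} u * f u \<partial>lborel)" by (rule dens)
    also have "\<dots> = \<bar>-1\<bar> *\<^sub>R (\<integral>x. indicator {..\<theta>0 - s} (2*\<theta>0 + (-1) * x) * f (2*\<theta>0 + (-1) * x) \<partial>lborel)"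
      by (rule lborel_integral_real_affine) simp
    also have "\<dots> = (\<integral>x. indicator {\<theta>0 + s..} x * f x \<partial>lborel)"
    proof -
      have "indicator {..\<theta>0 - s} (2*\<theta>0 + (-1) * x) * f (2*\<theta>0 + (-1) * x) = indicator {\<theta>0 + s..} x * f x" for x :: real
      proof -
        have "f (2*\<theta>0 + (-1) * x) = f (\<theta>0 - (x - \<theta>0))" by simp
        also have "\<dots> = f (\<theta>0 + (x - \<theta>0))" by (rule symm[symmetric])
        also have "\<dots> = f x" by simp
        finally show ?thesis by (simp add: indicator_def)
      qed
      then show ?thesis by simp
    qed
    also have "\<dots> = (\<integral>x. indicator {\<theta>0 + s<..} x * f x \<partial>lborel)"
    proof (rule integral_cong_AE)
      show "(\<lambda>x. indicator {\<theta>0 + s..} x * f x) \<in> borel_measurable lborel"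
        using intI[of "{\<theta>0 + s..}"] by (simp add: borel_measurable_integrable)
      show "(\<lambda>x. indicator {\<theta>0 + s<..} x * f x) \<in> borel_measurable lborel"
        using intI[of "{\<theta>0 + s<..}"] by (simp add: borel_measurable_integrable)
      show "AE x in lborel. indicator {\<theta>0 + s..} x * f x = indicator {\<theta>0 + s<..} x * f x"
        using AE_lborel_singleton[of "\<theta>0 + s"] by eventually_elim (auto simp: indicator_def)
    qed
    finally show ?thesis .
  qed
  have sumc: "F (\<theta>0 + s) + F (\<theta>0 - s) = c" for s
  proof -
    have "F (\<theta>0 + s) + F (\<theta>0 - s) = (\<integral>u. indicator {..\<theta>0 + s} u * f u + indicator {\<theta>0 + s<..} u * f u \<partial>lborel)"
      unfolding refl dens[of "\<theta>0 + s"]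
      by (rule Bochner_Integration.integral_add[symmetric]) (auto intro: intI)
    also have "\<dots> = c" unfolding c_def
      by (rule Bochner_Integration.integral_cong) (auto simp: indicator_def)
    finally show ?thesis .
  qed
  have l1: "((\<lambda>s. F (\<theta>0 + s)) \<longlongrightarrow> 1) at_top"
    by (rule filterlim_compose[OF df_props(4)[OF dfF]])
       (rule filterlim_tendsto_add_at_top[OF tendsto_const filterlim_ident])
  have fb: "filterlim (\<lambda>s. \<theta>0 - s) at_bot at_top"
    unfolding filterlim_at_bot
  proof
    fix Z show "\<forall>\<^sub>F s in at_top. \<theta>0 - s \<le> Z"
      using eventually_ge_at_top[of "\<theta>0 - Z"] by eventually_elim simp
  qed
  have l2: "((\<lambda>s. F (\<theta>0 - s)) \<longlongrightarrow> 0) at_top"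
    by (rule filterlim_compose[OF df_props(3)[OF dfF] fb])
  have "((\<lambda>s. F (\<theta>0 + s) + F (\<theta>0 - s)) \<longlongrightarrow> 1 + 0) at_top" by (intro tendsto_add l1 l2)
  moreover have "((\<lambda>s. F (\<theta>0 + s) + F (\<theta>0 - s)) \<longlongrightarrow> c) at_top" by (simp add: sumc)
  ultimately have "c = 1" using tendsto_unique[of "at_top :: real filter"] by force
  then show ?thesis using sumc by simp
qed

end

context
  fixes F f :: "real \<Rightarrow> real" and \<theta>0 \<alpha> \<epsilon> :: real and k :: "nat \<Rightarrow> nat"
  assumes dfF: "is_distribution_function F"
    and contF: "continuous_on UNIV F"
    and dens_nonneg: "\<And>x. f x \<ge> 0"
    and dens_int: "integrable lborel f"
    and dens: "\<And>x. F x = (\<integral>t. indicator {..x} t * f t \<partial>lborel)"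
    and symm: "\<And>t. f (\<theta>0 + t) = f (\<theta>0 - t)"
    and unimodal: "\<exists>m. mono_on {..m} f \<and> antimono_on {m..} f"
    and alpha: "0 < \<alpha>" "\<alpha> < 1"
    and eps: "0 \<le> \<epsilon>" "\<epsilon> < 1/2"
    and kn: "\<And>n j. \<bar>alpha_star n (k n) \<epsilon> - \<alpha>\<bar> \<le> \<bar>alpha_star n j \<epsilon> - \<alpha>\<bar>"
begin

lemma Fsym': "F (\<theta>0 + t) + F (\<theta>0 - t) = 1"
  by (rule F_sym[OF dfF contF dens_nonneg dens_int dens symm])

lemma F_half: "t \<ge> 0 \<Longrightarrow> 1/2 \<le> F (\<theta>0 + t)"
  using Fsym'[of t] df_props(1)[OF dfF, of "\<theta>0 - t" "\<theta>0 + t"] by simp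

lemma F_theta: "F \<theta>0 = 1/2"
  using Fsym'[of 0] by simp

lemma rej_fun: "is_distribution_function G \<Longrightarrow> reject_prob (sign_test \<theta>0 k) G = (\<lambda>n. Rej k n (1 - G \<theta>0))"
  by (rule ext) (rule reject_prob_eq)

lemma ROB:
  assumes \<delta>: "0 \<le> \<delta>" "\<delta> \<le> 1"
    and H: "\<And>t. K < t \<Longrightarrow> 0 \<le> t \<Longrightarrow> 1 - (1 - \<epsilon>)/2 < (1 - \<delta>) * F (\<theta>0 + t)"
  shows "robust_power_K (sign_test \<theta>0 k) F \<delta> K"
  unfolding robust_power_K_def
proof (intro allI impI ballI)
  fix l G assume l: "K < \<bar>l\<bar>" and G: "G \<in> contam_nbhd \<delta> (shift_df F l)"
  obtain H where Hd: "is_distribution_function H" and Geq: "G = (\<lambda>x. (1 - \<delta>) * shift_df F l x + \<delta> * H x)"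
    using contam_member[OF G] by blast
  have Gd: "is_distribution_function G" unfolding Geq by (rule df_mix[OF dfF contF Hd \<delta>])
  define u where "u = F (\<theta>0 + \<bar>l\<bar>)"
  have u: "1 - (1 - \<epsilon>)/2 < (1 - \<delta>) * u" unfolding u_def using H[of "\<bar>l\<bar>"] l by simp
  define h where "h = H \<theta>0"
  have h: "0 \<le> h" "h \<le> 1" unfolding h_def using df_bounds[OF Hd] by auto
  have G0: "0 \<le> G \<theta>0" "G \<theta>0 \<le> 1" using df_bounds[OF Gd] by auto
  have Gth: "G \<theta>0 = (1 - \<delta>) * F (\<theta>0 - l) + \<delta> * h" by (simp add: Geq shift_df_def h_def)
  show "reject_prob (sign_test \<theta>0 k) G \<longlonglongrightarrow> 1"
    unfolding rej_fun[OF Gd]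
  proof (cases "0 \<le> l")
    case True
    have "u = F (\<theta>0 + l)" using True by (simp add: u_def)
    then have "F (\<theta>0 - l) = 1 - u" using Fsym'[of l] by linarith
    then have "G \<theta>0 = (1 - \<delta>) * (1 - u) + \<delta> * h" by (simp add: Gth)
    then have "1 - G \<theta>0 = (1 - \<delta>) * u + \<delta> * (1 - h)" by (simp add: algebra_simps)
    moreover have "\<delta> * (1 - h) \<ge> 0" using \<delta> h by simp
    ultimately have "1 - (1 - \<epsilon>)/2 < 1 - G \<theta>0" using u by linarith
    then show "(\<lambda>n. Rej k n (1 - G \<theta>0)) \<longlonglongrightarrow> 1"
      using G0 by (intro rej_hi[OF alpha eps kn]) auto
  next
    case False
    have "F (\<theta>0 - l) = u" using False by (simp add: u_def)
    then have "1 - G \<theta>0 = 1 - (1 - \<delta>) * u - \<delta> * h" by (simp add: Gth)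
    moreover have "\<delta> * h \<ge> 0" using \<delta> h by simp
    ultimately have "1 - G \<theta>0 < (1 - \<epsilon>)/2" using u by linarith
    then show "(\<lambda>n. Rej k n (1 - G \<theta>0)) \<longlonglongrightarrow> 1"
      using G0 by (intro rej_lo[OF alpha eps kn]) auto
  qed
qed

lemma NROB:
  assumes \<delta>: "0 \<le> \<delta>" "\<delta> < 1"
    and t: "0 \<le> t" "K < t" and Ft: "(1 - \<delta>) * F (\<theta>0 + t) \<le> 1 - (1 - \<epsilon>)/2"
  shows "\<not> robust_power_K (sign_test \<theta>0 k) F \<delta> K"
proof
  assume R: "robust_power_K (sign_test \<theta>0 k) F \<delta> K"
  define r where "r = (1 - \<epsilon>)/2"
  have r: "1/4 < r" "r \<le> 1/2" using eps by (auto simp: r_def)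
  define u where "u = F (\<theta>0 + t)"
  have u: "1/2 \<le> u" "u \<le> 1" using F_half[OF t(1)] df_bounds[OF dfF] by (auto simp: u_def)
  have Fu: "(1 - \<delta>) * u \<le> 1 - r" using Ft by (simp add: u_def r_def)
  define lo where "lo = (1 - \<delta>) * (1 - u)"
  define h where "h = (if lo \<le> r then (if \<delta> = 0 then 0 else (1 - (1 - \<delta>) * u - r) / \<delta>) else 1)"
  have h: "0 \<le> h \<and> h \<le> 1"
  proof (cases "lo \<le> r")
    case True
    show ?thesis
    proof (cases "\<delta> = 0")
      case False
      then have dpos: "\<delta> > 0" using \<delta> by simp
      have "0 \<le> 1 - (1 - \<delta>) * u - r" using Fu by simp
      moreover have "1 - (1 - \<delta>) * u - r \<le> \<delta>" using True by (simp add: lo_def algebra_simps)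
      ultimately show ?thesis using True False dpos by (simp add: h_def divide_le_eq)
    qed (simp add: h_def True)
  qed (simp add: h_def)
  define p where "p = 1 - (1 - \<delta>) * u - \<delta> * h"
  have p: "p = r \<or> (r < p \<and> p < 1 - r)"
  proof (cases "lo \<le> r")
    case True
    show ?thesis
    proof (cases "\<delta> = 0")
      case True
      have "p = 1 - u" using True by (simp add: p_def)
      moreover have "1 - u \<le> r" using \<open>lo \<le> r\<close> True by (simp add: lo_def)
      moreover have "r \<le> 1 - u" using Fu True by simp
      ultimately show ?thesis by auto
    next
      case False
      have "p = r" using False \<open>lo \<le> r\<close> by (simp add: p_def h_def)
      then show ?thesis by simp
    qed
  next
    case False
    have pe: "p = lo" using False by (simp add: p_def h_def lo_def algebra_simps)
    have "(1 - \<delta>) * (1 - u) \<le> (1 - \<delta>) * (1/2)" using u \<delta> by (intro mult_left_mono) auto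
    then have "lo \<le> (1 - \<delta>) / 2" unfolding lo_def by simp
    then have lo2: "lo \<le> (1 - \<delta>) / 2" .
    have "p < 1 - r"
    proof (cases "\<delta> = 0")
      case True
      then show ?thesis using pe False r lo2 by simp
    next
      case False
      then have "(1 - \<delta>) / 2 < 1/2" using \<delta> by simp
      then show ?thesis using pe lo2 r by linarith
    qed
    then show ?thesis using pe False by simp
  qed
  define G where "G = (\<lambda>x. (1 - \<delta>) * shift_df F (- t) x + \<delta> * hstep \<theta>0 h x)"
  have Hd: "is_distribution_function (hstep \<theta>0 h)" using h by (intro hstep_df) auto
  have GN: "G \<in> contam_nbhd \<delta> (shift_df F (- t))"
    unfolding contam_nbhd_def G_def using Hd by blast
  have Gd: "is_distribution_function G" unfolding G_def by (rule df_mix[OF dfF contF Hd]) (use \<delta> in auto)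
  have Gth: "1 - G \<theta>0 = p" by (simp add: G_def shift_df_def hstep_at p_def u_def)
  have "K < \<bar>- t\<bar>" using t by simp
  then have "reject_prob (sign_test \<theta>0 k) G \<longlonglongrightarrow> 1" using R GN unfolding robust_power_K_def by blast
  then have "(\<lambda>n. Rej k n p) \<longlonglongrightarrow> 1" unfolding rej_fun[OF Gd] Gth .
  moreover have "\<not> (\<lambda>n. Rej k n p) \<longlonglongrightarrow> 1"
  proof (cases "p = r")
    case True
    show ?thesis
    proof
      assume "(\<lambda>n. Rej k n p) \<longlonglongrightarrow> 1"
      then have "(\<lambda>n. Rej k n ((1 - \<epsilon>)/2)) \<longlonglongrightarrow> 1" using True by (simp add: r_def)
      from LIMSEQ_unique[OF this rej_r[OF alpha eps kn]] alpha show False by simp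
    qed
  next
    case False
    then have "r < p" "p < 1 - r" using p by auto
    then show ?thesis by (intro rej_not1[OF alpha eps kn]) (auto simp: r_def)
  qed
  ultimately show False by simp
qed

lemma robust_set:
  assumes \<delta>: "0 \<le> \<delta>" "\<delta> < (1 - \<epsilon>)/2"
  shows "{K. robust_power_K (sign_test \<theta>0 k) F \<delta> K} = {quantile F ((1 + \<epsilon>) / (2 * (1 - \<delta>))) - \<theta>0..}"
proof -
  define q where "q = (1 + \<epsilon>) / (2 * (1 - \<delta>))"
  have d1: "\<delta> < 1" using \<delta> eps by (simp add: field_simps)
  have q: "0 < q" "q < 1" using \<delta> eps d1 by (auto simp: q_def field_simps)
  have qd: "(1 - \<delta>) * q = 1 - (1 - \<epsilon>)/2" using d1 by (simp add: q_def field_simps)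
  have qh: "1/2 \<le> q" using \<delta> eps d1 by (simp add: q_def field_simps)
  define Q where "Q = quantile F q"
  note qp = quantile_props[OF dfF contF dens_nonneg dens_int dens q]
  show ?thesis unfolding q_def[symmetric] Q_def[symmetric]
  proof (intro equalityI subsetI)
    fix K assume "K \<in> {K. robust_power_K (sign_test \<theta>0 k) F \<delta> K}"
    then have R: "robust_power_K (sign_test \<theta>0 k) F \<delta> K" by simp
    show "K \<in> {Q - \<theta>0..}"
    proof (rule ccontr)
      assume "K \<notin> {Q - \<theta>0..}"
      then have KQ: "K < Q - \<theta>0" by simp
      define t where "t = (if K < 0 then 0 else (K + (Q - \<theta>0)) / 2)"
      have t: "0 \<le> t" "K < t" using KQ by (auto simp: t_def)
      have "F (\<theta>0 + t) \<le> q"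
      proof (cases "K < 0")
        case True
        then show ?thesis using F_theta qh by (simp add: t_def)
      next
        case False
        then have "\<theta>0 + t < Q" using KQ by (simp add: t_def field_simps)
        then show ?thesis using qp(2)[of "\<theta>0 + t"] by (simp add: Q_def)
      qed
      then have "(1 - \<delta>) * F (\<theta>0 + t) \<le> (1 - \<delta>) * q" using d1 by (intro mult_left_mono) auto
      then have "(1 - \<delta>) * F (\<theta>0 + t) \<le> 1 - (1 - \<epsilon>)/2" using qd by simp
      from NROB[OF \<delta>(1) d1 t this] R show False by simp
    qed
  next
    fix K assume "K \<in> {Q - \<theta>0..}"
    then have KQ: "Q - \<theta>0 \<le> K" by simp
    have "robust_power_K (sign_test \<theta>0 k) F \<delta> K"
    proof (rule ROB)
      show "0 \<le> \<delta>" "\<delta> \<le> 1" using \<delta> d1 by auto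
      fix t assume "K < t" "0 \<le> t"
      then have "Q < \<theta>0 + t" using KQ by simp
      then have "q < F (\<theta>0 + t)"
        using quantile_gt[OF dfF contF dens_nonneg dens_int dens q unimodal] by (simp add: Q_def)
      then have "(1 - \<delta>) * q < (1 - \<delta>) * F (\<theta>0 + t)" using d1 by (intro mult_strict_left_mono) auto
      then show "1 - (1 - \<epsilon>)/2 < (1 - \<delta>) * F (\<theta>0 + t)" using qd by simp
    qed
    then show "K \<in> {K. robust_power_K (sign_test \<theta>0 k) F \<delta> K}" by simp
  qed
qed

lemma robust_iff:
  assumes \<delta>: "0 \<le> \<delta>" "\<delta> < 1/2"
  shows "has_robust_power (sign_test \<theta>0 k) F \<delta> \<longleftrightarrow> \<delta> < (1 - \<epsilon>)/2"
proof
  assume "has_robust_power (sign_test \<theta>0 k) F \<delta>"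
  then obtain K where R: "robust_power_K (sign_test \<theta>0 k) F \<delta> K" by (auto simp: has_robust_power_def)
  show "\<delta> < (1 - \<epsilon>)/2"
  proof (rule ccontr)
    assume "\<not> \<delta> < (1 - \<epsilon>)/2"
    then have dr: "(1 - \<epsilon>)/2 \<le> \<delta>" by simp
    define t where "t = max K 0 + 1"
    have t: "0 \<le> t" "K < t" by (auto simp: t_def)
    have "(1 - \<delta>) * F (\<theta>0 + t) \<le> (1 - \<delta>) * 1" using \<delta> df_bounds[OF dfF] by (intro mult_left_mono) auto
    also have "\<dots> \<le> 1 - (1 - \<epsilon>)/2" using dr by simp
    finally have "(1 - \<delta>) * F (\<theta>0 + t) \<le> 1 - (1 - \<epsilon>)/2" .
    from NROB[OF \<delta>(1) _ t this] R \<delta> show False by simp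
  qed
next
  assume "\<delta> < (1 - \<epsilon>)/2"
  then have "quantile F ((1 + \<epsilon>) / (2 * (1 - \<delta>))) - \<theta>0 \<in> {K. robust_power_K (sign_test \<theta>0 k) F \<delta> K}"
    using robust_set[OF \<delta>(1)] by simp
  then show "has_robust_power (sign_test \<theta>0 k) F \<delta>" by (auto simp: has_robust_power_def)
qed

lemma main:
  shows "(\<forall>\<delta>. 0 \<le> \<delta> \<and> \<delta> < (1 - \<epsilon>) / 2 \<longrightarrow>
            consistency_distance (sign_test \<theta>0 k) F \<delta>
              = quantile F ((1 + \<epsilon>) / (2 * (1 - \<delta>))) - \<theta>0)
         \<and> power_breakdown (sign_test \<theta>0 k) F = (1 - \<epsilon>) / 2
         \<and> (has_robust_power (sign_test \<theta>0 k) F \<epsilon> \<longleftrightarrow> \<epsilon> < 1/3)"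
proof (intro conjI allI impI)
  fix \<delta> assume \<delta>: "0 \<le> \<delta> \<and> \<delta> < (1 - \<epsilon>) / 2"
  show "consistency_distance (sign_test \<theta>0 k) F \<delta> = quantile F ((1 + \<epsilon>) / (2 * (1 - \<delta>))) - \<theta>0"
    unfolding consistency_distance_def using robust_set[of \<delta>] \<delta> by simp
next
  have "{\<delta>. 0 \<le> \<delta> \<and> \<delta> < 1/2 \<and> has_robust_power (sign_test \<theta>0 k) F \<delta>} = {0..<(1 - \<epsilon>)/2}"
  proof (intro equalityI subsetI)
    fix \<delta> assume "\<delta> \<in> {\<delta>. 0 \<le> \<delta> \<and> \<delta> < 1/2 \<and> has_robust_power (sign_test \<theta>0 k) F \<delta>}"
    then show "\<delta> \<in> {0..<(1 - \<epsilon>)/2}" using robust_iff by auto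
  next
    fix \<delta> assume d: "\<delta> \<in> {0..<(1 - \<epsilon>)/2}"
    then have "\<delta> < 1/2" using eps by (simp add: field_simps)
    then show "\<delta> \<in> {\<delta>. 0 \<le> \<delta> \<and> \<delta> < 1/2 \<and> has_robust_power (sign_test \<theta>0 k) F \<delta>}"
      using d robust_iff by auto
  qed
  moreover have "0 < (1 - \<epsilon>)/2" using eps by simp
  ultimately show "power_breakdown (sign_test \<theta>0 k) F = (1 - \<epsilon>) / 2"
    unfolding power_breakdown_def by simp
next
  have "has_robust_power (sign_test \<theta>0 k) F \<epsilon> \<longleftrightarrow> \<epsilon> < (1 - \<epsilon>)/2" using robust_iff eps by simp
  also have "\<dots> \<longleftrightarrow> \<epsilon> < 1/3" by (simp add: field_simps)
  finally show "has_robust_power (sign_test \<theta>0 k) F \<epsilon> \<longleftrightarrow> \<epsilon> < 1/3" .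
qed

end

theorem theorem3:
  fixes F f :: "real \<Rightarrow> real" and \<theta>0 \<alpha> \<epsilon> :: real and k :: "nat \<Rightarrow> nat"
  assumes dfF: "is_distribution_function F"
    and contF: "continuous_on UNIV F"
    and dens_nonneg: "\<And>x. f x \<ge> 0"
    and dens_int: "integrable lborel f"
    and dens: "\<And>x. F x = (\<integral>t. indicator {..x} t * f t \<partial>lborel)"
    and symm: "\<And>t. f (\<theta>0 + t) = f (\<theta>0 - t)"
    and unimodal: "\<exists>m. mono_on {..m} f \<and> antimono_on {m..} f"
    and alpha: "0 < \<alpha>" "\<alpha> < 1"
    and eps: "0 \<le> \<epsilon>" "\<epsilon> < 1/2"
    and kn: "\<And>n j. \<bar>alpha_star n (k n) \<epsilon> - \<alpha>\<bar> \<le> \<bar>alpha_star n j \<epsilon> - \<alpha>\<bar>"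
  shows "(\<forall>\<delta>. 0 \<le> \<delta> \<and> \<delta> < (1 - \<epsilon>) / 2 \<longrightarrow>
            consistency_distance (sign_test \<theta>0 k) F \<delta>
              = quantile F ((1 + \<epsilon>) / (2 * (1 - \<delta>))) - \<theta>0)
         \<and> power_breakdown (sign_test \<theta>0 k) F = (1 - \<epsilon>) / 2
         \<and> (has_robust_power (sign_test \<theta>0 k) F \<epsilon> \<longleftrightarrow> \<epsilon> < 1/3)"
    using main[OF dfF contF dens_nonneg dens_int dens symm unimodal alpha eps kn] .

end
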